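(* Let $\phi\colon\mathbb{N}\to(0,\infty)$ be an arbitrary function and let $$R(\phi)=\{x\in\mathbb{I}\colon R_n(x)\ge\phi(n)\text{ for infinitely many }n\}.$$ Then $\mathcal{L}(R(\phi))=1$ if $\sum_{n=1}^\infty\frac{1}{\phi(n)}=\infty$, and $\mathcal{L}(R(\phi))=0$ if $\sum_{n=1}^\infty\frac{1}{\phi(n)}<\infty$.
   Context: $\mathcal{L}$ is Lebesgue measure on $(0,1)$, $\mathbb{I}=(0,1)\setminus\mathbb{Q}$. Signed Engel expansion: define $T\colon[0,1)\to[0,1)$ by: for $k\in\mathbb{N}$, $Tx=\lceil 1/x\rceil x-1$ if $x\in(\frac{1}{2k},\frac{1}{2k-1})$; $Tx=1-\lfloor 1/x\rfloor x$ if $x\in(\frac{1}{2k+1},\frac{1}{2k})$; $Tx=0$ if $x\in\{0\}\cup\{1/n\colon n\ge 2\}$. For $x\in(0,1)$, $d_1(x)=\lceil 1/x\rceil$ if $x\in[\frac{1}{2k},\frac{1}{2k-1})$ for some $k\in\mathbb{N}$, and $d_1(x)=\lfloor 1/x\rfloor$ if $x\in[\frac{1}{2k+1},\frac{1}{2k})$ for some $k\in\mathbb{N}$; $d_{n+1}(x)=d_1(T^nx)$ (defined for all $n$ when $x$ is irrational). For $x\in\mathbb{I}$, $R_1(x)=d_1(x)$ and $R_n(x)=d_n(x)/d_{n-1}(x)$ for $n\ge2$. *)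

theory Defs
  imports "HOL-Analysis.Analysis"
begin

definition sengel_T :: "real \<Rightarrow> real" where
  "sengel_T x =
     (if \<exists>k::nat. k \<ge> 1 \<and> x \<in> {1 / real (2*k) <..< 1 / real (2*k - 1)}
      then real_of_int (ceiling (1 / x)) * x - 1
      else if \<exists>k::nat. k \<ge> 1 \<and> x \<in> {1 / real (2*k+1) <..< 1 / real (2*k)}
      then 1 - real_of_int (floor (1 / x)) * x
      else 0)"

definition sengel_d1 :: "real \<Rightarrow> int" where
  "sengel_d1 x =
     (if \<exists>k::nat. k \<ge> 1 \<and> x \<in> {1 / real (2*k) ..< 1 / real (2*k - 1)}
      then ceiling (1 / x) else floor (1 / x))"

definition sengel_d :: "nat \<Rightarrow> real \<Rightarrow> int" where
  "sengel_d n x = sengel_d1 ((sengel_T ^^ (n - 1)) x)"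

definition sengel_R :: "nat \<Rightarrow> real \<Rightarrow> real" where
  "sengel_R n x =
     (if n \<le> 1 then real_of_int (sengel_d 1 x)
      else real_of_int (sengel_d n x) / real_of_int (sengel_d (n - 1) x))"

definition sengel_Rset :: "(nat \<Rightarrow> real) \<Rightarrow> real set" where
  "sengel_Rset phi = {x \<in> {0<..<1} - \<rat>. infinite {n. n \<ge> 1 \<and> sengel_R n x \<ge> phi n}}"

end

theory Submission
  imports Defs
begin

lemma T_plus:
  fixes m :: nat and y :: real
  assumes m: "m \<ge> 1" and y1: "1 / real (2*m) < y" and y2: "y < 1 / real (2*m-1)"
  shows "sengel_T y = 2*m*y - 1" "sengel_d1 y = 2*m"
proof -
  have "1 / real (2*m) > 0" using m by simp
  hence ypos: "y > 0" using y1 by linarith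
  have "real (2*m - 1) = 2*real m - 1" using m by simp
  hence c: "2*real m - 1 < 1/y" "1/y < 2*real m" using y1 y2 ypos m
    by (auto simp: field_simps)
  have ce: "ceiling (1/y) = 2*int m"
    using c by (intro ceiling_unique) auto
  have "\<exists>k::nat. k \<ge> 1 \<and> y \<in> {1 / real (2*k) <..< 1 / real (2*k - 1)}"
    using m y1 y2 by auto
  thus "sengel_T y = 2*m*y - 1" unfolding sengel_T_def using ce by simp
  have "\<exists>k::nat. k \<ge> 1 \<and> y \<in> {1 / real (2*k) ..< 1 / real (2*k - 1)}"
    using m y1 y2 by auto
  thus "sengel_d1 y = 2*m" unfolding sengel_d1_def using ce by simp
qed

lemma T_minus:
  fixes m :: nat and y :: real
  assumes m: "m \<ge> 1" and y1: "1 / real (2*m+1) < y" and y2: "y < 1 / real (2*m)"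
  shows "sengel_T y = 1 - 2*m*y" "sengel_d1 y = 2*m"
proof -
  have "1 / real (2*m+1) > 0" using m by simp
  hence ypos: "y > 0" using y1 by linarith
  hence c: "2*real m < 1/y" "1/y < 2*real m + 1" using y1 y2 ypos m
    by (auto simp: field_simps)
  have fl: "floor (1/y) = 2*int m"
    using c by (intro floor_unique) auto
  have no: "\<not> (\<exists>k::nat. k \<ge> 1 \<and> y \<in> {1 / real (2*k) ..< 1 / real (2*k - 1)})"
  proof
    assume "\<exists>k::nat. k \<ge> 1 \<and> y \<in> {1 / real (2*k) ..< 1 / real (2*k - 1)}"
    then obtain k :: nat where k: "k \<ge> 1" "1 / real (2*k) \<le> y" "y < 1 / real (2*k - 1)" by auto
    have "real (2*k - 1) = 2*real k - 1" using k by simp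
    hence "2*real k - 1 < 1/y" "1/y \<le> 2*real k" using k ypos
      by (auto simp: field_simps)
    with c have h: "real m < real k" "real k < real m + 1" by linarith+
    from h(1) have "m < k" by simp
    moreover from h(2) have "k < m + 1" by (metis of_nat_1 of_nat_add of_nat_less_iff)
    ultimately show False by linarith
  qed
  hence no2: "\<not> (\<exists>k::nat. k \<ge> 1 \<and> y \<in> {1 / real (2*k) <..< 1 / real (2*k - 1)})"
    by auto
  have ex: "\<exists>k::nat. k \<ge> 1 \<and> y \<in> {1 / real (2*k+1) <..< 1 / real (2*k)}"
    using m y1 y2 by auto
  have "sengel_T y = 1 - real_of_int (floor (1/y)) * y" unfolding sengel_T_def
    by (subst if_not_P[OF no2], subst if_P[OF ex], rule refl)
  thus "sengel_T y = 1 - 2*m*y" using fl by simp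
  have "sengel_d1 y = floor (1/y)" unfolding sengel_d1_def
    by (subst if_not_P[OF no], rule refl)
  thus "sengel_d1 y = 2*m" using fl by simp
qed

lemma C_set_borel:
  fixes f g :: "nat \<Rightarrow> real"
  shows "{x::real. \<exists>k::nat. k \<ge> 1 \<and> x \<in> {f k <..< g k}} \<in> sets borel"
    "{x::real. \<exists>k::nat. k \<ge> 1 \<and> x \<in> {f k ..< g k}} \<in> sets borel"
proof -
  have "{x::real. \<exists>k::nat. k \<ge> 1 \<and> x \<in> {f k <..< g k}} = (\<Union>k. if k \<ge> 1 then {f k <..< g k} else {})"
    by auto
  also have "\<dots> \<in> sets borel" by (intro sets.countable_UN) auto
  finally show "{x::real. \<exists>k::nat. k \<ge> 1 \<and> x \<in> {f k <..< g k}} \<in> sets borel" .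
  have "{x::real. \<exists>k::nat. k \<ge> 1 \<and> x \<in> {f k ..< g k}} = (\<Union>k. if k \<ge> 1 then {f k ..< g k} else {})"
    by auto
  also have "\<dots> \<in> sets borel" by (intro sets.countable_UN) auto
  finally show "{x::real. \<exists>k::nat. k \<ge> 1 \<and> x \<in> {f k ..< g k}} \<in> sets borel" .
qed

lemma T_meas[measurable]: "sengel_T \<in> borel_measurable borel"
proof -
  have p1[measurable]: "Measurable.pred borel (\<lambda>x::real. \<exists>k::nat. k \<ge> 1 \<and> x \<in> {1 / real (2*k) <..< 1 / real (2*k - 1)})"
    unfolding pred_def using C_set_borel(1) by simp
  have p2[measurable]: "Measurable.pred borel (\<lambda>x::real. \<exists>k::nat. k \<ge> 1 \<and> x \<in> {1 / real (2*k+1) <..< 1 / real (2*k)})"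
    unfolding pred_def using C_set_borel(1) by simp
  show ?thesis unfolding sengel_T_def[abs_def] by measurable
qed

lemma d1_meas[measurable]: "(\<lambda>x. real_of_int (sengel_d1 x)) \<in> borel_measurable borel"
proof -
  have p1[measurable]: "Measurable.pred borel (\<lambda>x::real. \<exists>k::nat. k \<ge> 1 \<and> x \<in> {1 / real (2*k) ..< 1 / real (2*k - 1)})"
    unfolding pred_def using C_set_borel(2) by simp
  show ?thesis unfolding sengel_d1_def[abs_def] by measurable
qed

lemma Tpow_meas[measurable]: "(sengel_T ^^ n) \<in> borel_measurable borel"
  by (induction n) (auto intro: measurable_comp)

lemma d_meas[measurable]: "(\<lambda>x. real_of_int (sengel_d n x)) \<in> borel_measurable borel"
  unfolding sengel_d_def by measurable


lemma T_plus':
  fixes m :: nat and y :: real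
  assumes m: "m \<ge> 1" and y1: "1 / (2*real m) < y" and y2: "y < 1 / (2*real m-1)"
  shows "sengel_T y = 2*real m*y - 1" "real_of_int (sengel_d1 y) = 2*real m"
proof -
  have e: "real (2*m - 1) = 2*real m - 1" "real (2*m) = 2 * real m" using m by auto
  show "sengel_T y = 2*real m*y - 1" using T_plus(1)[OF m, of y] y1 y2 e by simp
  show "real_of_int (sengel_d1 y) = 2*real m" using T_plus(2)[OF m, of y] y1 y2 e by simp
qed

lemma T_minus':
  fixes m :: nat and y :: real
  assumes m: "m \<ge> 1" and y1: "1 / (2*real m+1) < y" and y2: "y < 1 / (2*real m)"
  shows "sengel_T y = 1 - 2*real m*y" "real_of_int (sengel_d1 y) = 2*real m"
proof -
  have e: "real (2*m+1) = 2*real m + 1" "real (2*m) = 2 * real m" using m by auto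
  show "sengel_T y = 1 - 2*real m*y" using T_minus(1)[OF m, of y] y1 y2 e by (simp add: add.commute)
  show "real_of_int (sengel_d1 y) = 2*real m" using T_minus(2)[OF m, of y] y1 y2 e by (simp add: add.commute)
qed

definition Om :: "nat \<Rightarrow> real set" where
  "Om a = {0<..<1 / (2*real a - 1)} - \<rat>"

lemma rats_lin:
  fixes c t z :: real
  assumes "c \<in> \<rat>" "t \<in> \<rat>" "c \<noteq> 0"
  shows "c * z + t \<in> \<rat> \<longleftrightarrow> z \<in> \<rat>"
proof
  assume h: "c * z + t \<in> \<rat>"
  have "z = (c * z + t - t) / c" using assms by simp
  also have "\<dots> \<in> \<rat>" using h assms by (intro Rats_divide Rats_diff) auto
  finally show "z \<in> \<rat>" .
next
  assume "z \<in> \<rat>" thus "c * z + t \<in> \<rat>" using assms by (intro Rats_add Rats_mult) auto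
qed

lemma img_plus:
  fixes m :: nat and Q :: "real \<Rightarrow> real \<Rightarrow> bool"
  assumes m: "m \<ge> 1"
  shows "{y \<in> {1/(2*real m)<..<1/(2*real m - 1)} - \<rat>. Q (real_of_int (sengel_d1 y)) (sengel_T y)}
    = (\<lambda>z. (1/(2*real m)) *\<^sub>R z + 1/(2*real m)) ` {z \<in> Om (m). Q (2*real m) z}"
proof -
  have mr: "real m \<ge> 1" using m by simp
  have q: "1/(2*real m) \<in> \<rat>" "(1/(2*real m)) \<noteq> 0" "2*real m \<in> \<rat>" "-1 \<in> \<rat>" "2 * real m \<noteq> 0" using mr by auto
  show ?thesis
  proof (intro set_eqI iffI)
    fix y assume "y \<in> {y \<in> {1/(2*real m)<..<1/(2*real m - 1)} - \<rat>. Q (real_of_int (sengel_d1 y)) (sengel_T y)}"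
    hence y: "1/(2*real m) < y" "y < 1/(2*real m - 1)" "y \<notin> \<rat>" "Q (real_of_int (sengel_d1 y)) (sengel_T y)" by auto
    note T = T_plus'[OF m y(1,2)]
    define z where "z = 2*real m*y - 1"
    have "0 < z" using y mr unfolding z_def by (auto simp: field_simps)
    moreover have "z < 1 / (2*real m - 1)"
    proof -
      have h: "y*(2*real m-1) < 1" using y(2) mr by (simp add: field_simps)
      have "z*(2*real m-1) = 2*real m*(y*(2*real m-1)) - (2*real m-1)" unfolding z_def by (simp add: algebra_simps)
      also have "\<dots> < 1" using h mr by simp
      finally show ?thesis using mr by (simp add: pos_less_divide_eq)
    qed
    moreover have "z \<notin> \<rat>" using y(3) rats_lin[OF q(3,4,5), of y] unfolding z_def by simp
    ultimately have "z \<in> {z \<in> Om (m). Q (2*real m) z}" using y(4) T unfolding Om_def z_def by auto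
    moreover have "y = (1/(2*real m)) *\<^sub>R z + 1/(2*real m)" unfolding z_def using mr by (simp add: field_simps)
    ultimately show "y \<in> (\<lambda>z. (1/(2*real m)) *\<^sub>R z + 1/(2*real m)) ` {z \<in> Om (m). Q (2*real m) z}" by blast
  next
    fix y assume "y \<in> (\<lambda>z. (1/(2*real m)) *\<^sub>R z + 1/(2*real m)) ` {z \<in> Om (m). Q (2*real m) z}"
    then obtain z where z: "0 < z" "z < 1/(2*real m - 1)" "z \<notin> \<rat>" "Q (2*real m) z"
       and yz: "y = (1/(2*real m)) * z + 1/(2*real m)" unfolding Om_def by auto
    have y1: "1/(2*real m) < y" using z mr yz by (auto simp: field_simps)
    have y2: "y < 1/(2*real m - 1)"
    proof -
      have h: "z*(2*real m - 1) < 1" using z(2) mr by (simp add: pos_less_divide_eq)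
      have zz: "z = 2*real m*y - 1" using yz mr by (simp add: field_simps)
      have "(y*(2*real m - 1)) * (2*real m) = (2*real m - 1) + z*(2*real m - 1)" unfolding zz by (simp add: algebra_simps)
      also have "\<dots> < 1 * (2*real m)" using h by simp
      finally have "y*(2*real m - 1) < 1" by (rule mult_right_less_imp_less) (use mr in auto)
      thus ?thesis using mr by (simp add: pos_less_divide_eq)
    qed
    have yq: "y \<notin> \<rat>" using z(3) rats_lin[OF q(1,1,2), of z] yz by simp
    note T = T_plus'[OF m y1 y2]
    have ee: "sengel_T y = 2*real m*y - 1" by (rule T(1))
    have "2*real m*y - 1 = z" using yz mr by (simp add: field_simps)
    hence "sengel_T y = z" using ee by simp
    thus "y \<in> {y \<in> {1/(2*real m)<..<1/(2*real m - 1)} - \<rat>. Q (real_of_int (sengel_d1 y)) (sengel_T y)}"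
      using y1 y2 yq T(2) z(4) by auto
  qed
qed

lemma img_minus:
  fixes m :: nat and Q :: "real \<Rightarrow> real \<Rightarrow> bool"
  assumes m: "m \<ge> 1"
  shows "{y \<in> {1/(2*real m + 1)<..<1/(2*real m)} - \<rat>. Q (real_of_int (sengel_d1 y)) (sengel_T y)}
    = (\<lambda>z. (-(1/(2*real m))) *\<^sub>R z + 1/(2*real m)) ` {z \<in> Om (m+1). Q (2*real m) z}"
proof -
  have mr: "real m \<ge> 1" using m by simp
  have q: "-(1/(2*real m)) \<in> \<rat>" "1/(2*real m) \<in> \<rat>" "-(1/(2*real m)) \<noteq> 0" "-2*real m \<in> \<rat>" "1 \<in> \<rat>" "-2 * real m \<noteq> 0" using mr by auto
  have e: "2 * real (m+1) - 1 = 2 * real m + 1" by simp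
  show ?thesis unfolding Om_def e
  proof (intro set_eqI iffI)
    fix y assume "y \<in> {y \<in> {1/(2*real m + 1)<..<1/(2*real m)} - \<rat>. Q (real_of_int (sengel_d1 y)) (sengel_T y)}"
    hence y: "1/(2*real m + 1) < y" "y < 1/(2*real m)" "y \<notin> \<rat>" "Q (real_of_int (sengel_d1 y)) (sengel_T y)" by auto
    note T = T_minus'[OF m y(1,2)]
    define z where "z = 1 - 2*real m*y"
    have "0 < z" using y mr unfolding z_def by (auto simp: field_simps)
    moreover have "z < 1 / (2*real m + 1)"
    proof -
      have h: "1 < y*(2*real m+1)" using y(1) mr by (simp add: field_simps)
      have "z*(2*real m+1) = (2*real m+1) - 2*real m*(y*(2*real m+1))" unfolding z_def by (simp add: algebra_simps)
      also have "\<dots> < 1" using h mr by simp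
      finally show ?thesis using mr by (simp add: pos_less_divide_eq)
    qed
    moreover have "z \<notin> \<rat>" using y(3) rats_lin[OF q(4,5,6), of y] unfolding z_def by simp
    ultimately have "z \<in> {z \<in> {0<..<1 / (2 * real m + 1)} - \<rat>. Q (2*real m) z}" using y(4) T unfolding z_def by auto
    moreover have "y = (-(1/(2*real m))) *\<^sub>R z + 1/(2*real m)" unfolding z_def using mr by (simp add: field_simps)
    ultimately show "y \<in> (\<lambda>z. (-(1/(2*real m))) *\<^sub>R z + 1/(2*real m)) ` {z \<in> {0<..<1 / (2 * real m + 1)} - \<rat>. Q (2*real m) z}" by blast
  next
    fix y assume "y \<in> (\<lambda>z. (-(1/(2*real m))) *\<^sub>R z + 1/(2*real m)) ` {z \<in> {0<..<1 / (2 * real m + 1)} - \<rat>. Q (2*real m) z}"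
    then obtain z where z: "0 < z" "z < 1/(2*real m + 1)" "z \<notin> \<rat>" "Q (2*real m) z"
       and yz: "y = (-(1/(2*real m))) * z + 1/(2*real m)" by auto
    have y1: "1/(2*real m + 1) < y"
    proof -
      have h: "z*(2*real m + 1) < 1" using z(2) mr by (simp add: pos_less_divide_eq)
      have zz: "z = 1 - 2*real m*y" using yz mr by (simp add: field_simps)
      have "(y*(2*real m + 1)) * (2*real m) = (2*real m + 1) - z*(2*real m + 1)" unfolding zz by (simp add: algebra_simps)
      also have "\<dots> > 1 * (2*real m)" using h by simp
      finally have "1 < y*(2*real m + 1)" by (rule mult_right_less_imp_less) (use mr in auto)
      thus ?thesis using mr by (simp add: pos_divide_less_eq)
    qed
    have y2: "y < 1/(2*real m)" using z mr yz by (auto simp: field_simps)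
    have yq: "y \<notin> \<rat>" using z(3) rats_lin[OF q(1,2,3), of z] yz by simp
    note T = T_minus'[OF m y1 y2]
    have ee: "sengel_T y = 1 - 2*real m*y" by (rule T(1))
    have "1 - 2*real m*y = z" using yz mr by (simp add: field_simps)
    hence "sengel_T y = z" using ee by simp
    thus "y \<in> {y \<in> {1/(2*real m + 1)<..<1/(2*real m)} - \<rat>. Q (real_of_int (sengel_d1 y)) (sengel_T y)}"
      using y1 y2 yq T(2) z(4) by auto
  qed
qed

definition Pset :: "nat \<Rightarrow> real set" where
  "Pset m = {1/(2*real m)<..<1/(2*real m - 1)} - \<rat>"
definition Mset :: "nat \<Rightarrow> real set" where
  "Mset m = {1/(2*real m + 1)<..<1/(2*real m)} - \<rat>"

lemma Rats_null: "(\<rat> :: real set) \<in> null_sets lborel"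
  by (rule countable_imp_null_set_lborel) (rule countable_rat)

lemma Rats_sets_borel: "\<rat> \<in> sets (borel :: real measure)"
  using Rats_null by (simp add: null_sets_def)

lemma Om_borel[measurable]: "Om a \<in> sets borel"
  unfolding Om_def using Rats_sets_borel by auto

lemma Pset_borel[measurable]: "Pset a \<in> sets borel"
  unfolding Pset_def using Rats_sets_borel by auto

lemma Mset_borel[measurable]: "Mset a \<in> sets borel"
  unfolding Mset_def using Rats_sets_borel by auto

lemma Om_emeasure:
  assumes "a \<ge> 1"
  shows "emeasure lebesgue (Om a) = ennreal (1 / (2*real a - 1))"
proof -
  have "emeasure lebesgue (Om a) = emeasure lborel (Om a)" by simp
  also have "\<dots> = emeasure lborel {0<..<1 / (2*real a - 1)}"
    unfolding Om_def
    by (rule emeasure_Diff_null_set[OF Rats_null]) simp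
  also have "\<dots> = ennreal (1 / (2*real a - 1))" using assms by simp
  finally show ?thesis .
qed

lemma inv_interval:
  fixes y lo hi :: real
  assumes "y > 0" "lo > 0" "hi > 0"
  shows "1/hi < y \<and> y < 1/lo \<longleftrightarrow> lo < 1/y \<and> 1/y < hi"
  using assms by (auto simp: field_simps)


lemma Om_partition:
  assumes a: "a \<ge> 1"
  shows "Om a = (\<Union>k. Pset (k+a) \<union> Mset (k+a))"
proof (intro set_eqI iffI)
  fix y assume "y \<in> Om a"
  hence y: "0 < y" "y < 1/(2*real a - 1)" "y \<notin> \<rat>" unfolding Om_def by auto
  have ar: "2*real a - 1 \<ge> 1" using a by simp
  define w where "w = 1/y"
  have wq: "w \<notin> \<rat>"
  proof
    assume "w \<in> \<rat>" hence "1/w \<in> \<rat>" by simp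
    thus False using y(3) unfolding w_def by simp
  qed
  have "y*(2*real a - 1) < 1" using y(2) ar by (simp add: pos_less_divide_eq)
  hence "(2*real a - 1) * y < 1" by (simp add: algebra_simps)
  hence w1: "w > 2*real a - 1" unfolding w_def using y(1) by (simp add: pos_less_divide_eq)
  have wpos: "w > 0" using y unfolding w_def by simp
  define n where "n = floor w"
  have nw: "real_of_int n < w" "w < real_of_int n + 1"
  proof -
    have "real_of_int n \<le> w" "w < real_of_int n + 1" unfolding n_def by linarith+
    moreover have "real_of_int n \<in> \<rat>" by (rule Rats_of_int)
    hence "real_of_int n \<noteq> w" using wq by auto
    ultimately show "real_of_int n < w" "w < real_of_int n + 1" by auto
  qed
  have n1: "n \<ge> 2*int a - 1" using w1 unfolding n_def by (simp add: le_floor_iff)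
  have yw: "y = 1/w" unfolding w_def using y by simp
  show "y \<in> (\<Union>k. Pset (k+a) \<union> Mset (k+a))"
  proof (cases "even n")
    case True
    then obtain b where b: "n = 2*b" by (rule evenE)
    have b1: "b \<ge> int a" using n1 b by linarith
    define m where "m = nat b"
    have m: "real_of_int n = 2 * real m" using b b1 a unfolding m_def by simp
    have ma: "m \<ge> a" using b1 unfolding m_def by linarith
    have "1/(2*real m + 1) < y \<and> y < 1/(2*real m)"
      unfolding yw using inv_interval[of "1/w" "2*real m" "2*real m + 1"] nw m ma a wpos by auto
    hence "y \<in> Mset m" unfolding Mset_def using y by auto
    thus ?thesis using ma by (intro UN_I[of "m - a"]) auto
  next
    case False
    then obtain b where b: "n = 2*b + 1" by (rule oddE)
    have b1: "b \<ge> int a - 1" using n1 b by linarith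
    define m where "m = nat (b+1)"
    have m: "real_of_int n = 2 * real m - 1" using b b1 a unfolding m_def by simp
    have ma: "m \<ge> a" using b1 unfolding m_def by linarith
    have "1/(2*real m) < y \<and> y < 1/(2*real m - 1)"
      unfolding yw using inv_interval[of "1/w" "2*real m - 1" "2*real m"] nw m ma a wpos by auto
    hence "y \<in> Pset m" unfolding Pset_def using y by auto
    thus ?thesis using ma by (intro UN_I[of "m - a"]) auto
  qed
next
  fix y assume "y \<in> (\<Union>k. Pset (k+a) \<union> Mset (k+a))"
  then obtain k where k: "y \<in> Pset (k+a) \<union> Mset (k+a)" by blast
  define m where "m = k + a"
  have m: "m \<ge> a" "y \<in> Pset m \<union> Mset m" using k unfolding m_def by auto
  have mr: "real m \<ge> real a" "real a \<ge> 1" using m a by auto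
  have le: "1/(2*real m - 1) \<le> 1/(2*real a - 1)" using mr by (intro divide_left_mono) auto
  have p: "0 < 1/(2*real m + 1)" "0 < 1/(2*real m)" using mr by simp_all
  have lt: "1/(2*real m) < 1/(2*real m - 1)" using mr by (intro divide_strict_left_mono) auto
  from m(2) have "0 < y \<and> y < 1/(2*real m - 1) \<and> y \<notin> \<rat>"
  proof
    assume "y \<in> Pset m"
    hence h: "1/(2*real m) < y" "y < 1/(2*real m - 1)" "y \<notin> \<rat>" unfolding Pset_def by auto
    have "0 < y" using h(1) p(2) by linarith
    thus ?thesis using h by simp
  next
    assume "y \<in> Mset m"
    hence h: "1/(2*real m+1) < y" "y < 1/(2*real m)" "y \<notin> \<rat>" unfolding Mset_def by auto
    have "0 < y" "y < 1/(2*real m - 1)" using h(1,2) p lt by linarith+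
    thus ?thesis using h by simp
  qed
  thus "y \<in> Om a" unfolding Om_def using le by auto
qed


lemma sets_lebesgue_of_borel: "S \<in> sets borel \<Longrightarrow> S \<in> sets (lebesgue :: real measure)"
  by simp

lemma aff_meas: "(\<lambda>y::real. c*y + t) \<in> borel_measurable borel"
  by measurable

lemma pre_borel:
  assumes "S \<in> sets borel" "A \<in> sets borel"
  shows "{y::real \<in> A. c*y + t \<in> S} \<in> sets borel"
proof -
  have "{y::real \<in> A. c*y + t \<in> S} = A \<inter> ((\<lambda>y. c*y + t) -` S \<inter> space borel)" by auto
  also have "\<dots> \<in> sets borel" using assms measurable_sets[OF aff_meas assms(1)] by auto
  finally show ?thesis .
qed

lemma step:
  fixes Q :: "real \<Rightarrow> real \<Rightarrow> bool"
  assumes a: "a \<ge> 1" and Qm: "\<And>m. {z. Q (2*real m) z} \<in> sets borel"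
  shows "emeasure lebesgue {y \<in> Om a. Q (real_of_int (sengel_d1 y)) (sengel_T y)}
    = (\<Sum>k. ennreal (1/(2*real (k+a))) * (emeasure lebesgue {z \<in> Om (k+a). Q (2*real (k+a)) z}
          + emeasure lebesgue {z \<in> Om (k+a+1). Q (2*real (k+a)) z}))"
proof -
  define A where "A k = {y \<in> Pset (k+a). Q (real_of_int (sengel_d1 y)) (sengel_T y)}" for k
  define B where "B k = {y \<in> Mset (k+a). Q (real_of_int (sengel_d1 y)) (sengel_T y)}" for k
  have m1: "k + a \<ge> 1" for k using a by simp
  have Aeq: "A k = {y \<in> Pset (k+a). (2*real (k+a))*y + (-1) \<in> {z. Q (2*real (k+a)) z}}" for k
  proof -
    have "y \<in> Pset (k+a) \<Longrightarrow> sengel_T y = 2*real (k+a)*y - 1 \<and> real_of_int (sengel_d1 y) = 2*real (k+a)" for y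
      using T_plus'[OF m1[of k]] unfolding Pset_def by auto
    thus ?thesis unfolding A_def by auto
  qed
  have Beq: "B k = {y \<in> Mset (k+a). (-2*real (k+a))*y + 1 \<in> {z. Q (2*real (k+a)) z}}" for k
  proof -
    have "y \<in> Mset (k+a) \<Longrightarrow> sengel_T y = 1 - 2*real (k+a)*y \<and> real_of_int (sengel_d1 y) = 2*real (k+a)" for y
      using T_minus'[OF m1[of k]] unfolding Mset_def by auto
    moreover have e: "\<And>y. (-2*real (k+a))*y + 1 = 1 - 2*real (k+a)*y" by (simp add: algebra_simps)
    ultimately show ?thesis unfolding B_def e by auto
  qed
  have Am: "A k \<in> sets lebesgue" for k unfolding Aeq by (intro sets_lebesgue_of_borel pre_borel Qm) simp
  have Bm: "B k \<in> sets lebesgue" for k unfolding Beq by (intro sets_lebesgue_of_borel pre_borel Qm) simp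
  have ABd: "A k \<inter> B k = {}" for k
  proof -
    have "Pset (k+a) \<inter> Mset (k+a) = {}" unfolding Pset_def Mset_def by auto
    thus ?thesis unfolding A_def B_def by auto
  qed
  have disj: "disjoint_family (\<lambda>k. A k \<union> B k)"
  proof (unfold disjoint_family_on_def, intro ballI impI)
    fix k l :: nat assume "k \<noteq> l"
    have sub: "A j \<union> B j \<subseteq> {y. 0 < y \<and> 2*real (j+a) - 1 < 1/y \<and> 1/y < 2*real (j+a) + 1}" for j
    proof
      fix y assume "y \<in> A j \<union> B j"
      hence "y \<in> Pset (j+a) \<union> Mset (j+a)" unfolding A_def B_def by auto
      moreover have p: "0 < 1/(2*real (j+a) + 1)" using a by simp
      moreover have l1: "1/(2*real (j+a)) < 1/(2*real (j+a) - 1)" using a by (intro divide_strict_left_mono) auto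
      moreover have l2: "1/(2*real (j+a) + 1) < 1/(2*real (j+a))" using a by (intro divide_strict_left_mono) auto
      ultimately have yb: "(1/(2*real (j+a)) < y \<and> y < 1/(2*real (j+a) - 1)) \<or> (1/(2*real (j+a)+1) < y \<and> y < 1/(2*real (j+a)))"
        unfolding Pset_def Mset_def by auto
      have y: "0 < y" "1/(2*real (j+a) + 1) < y" "y < 1/(2*real (j+a) - 1)"
        using yb by (elim disjE conjE; use p l1 l2 in linarith)+
      have "2*real (j+a) - 1 < 1/y \<and> 1/y < 2*real (j+a) + 1"
        using inv_interval[of y "2*real (j+a) - 1" "2*real (j+a) + 1"] y a by auto
      thus "y \<in> {y. 0 < y \<and> 2*real (j+a) - 1 < 1/y \<and> 1/y < 2*real (j+a) + 1}" using y by auto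
    qed
    show "(A k \<union> B k) \<inter> (A l \<union> B l) = {}"
    proof (rule ccontr)
      assume "(A k \<union> B k) \<inter> (A l \<union> B l) \<noteq> {}"
      then obtain y where y: "y \<in> A k \<union> B k" "y \<in> A l \<union> B l" by blast
      have yk: "2*real (k+a) - 1 < 1/y" "1/y < 2*real (k+a) + 1" using subsetD[OF sub[of k] y(1)] by auto
      have yl: "2*real (l+a) - 1 < 1/y" "1/y < 2*real (l+a) + 1" using subsetD[OF sub[of l] y(2)] by auto
      have "2*real (k+a) - 1 < 2*real (l+a) + 1" "2*real (l+a) - 1 < 2*real (k+a) + 1" using yk yl by linarith+
      hence "real k < real l + 1" "real l < real k + 1" by auto
      hence "k < l + 1" "l < k + 1" by linarith+
      thus False using \<open>k \<noteq> l\<close> by linarith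
    qed
  qed
  have Seq: "{y \<in> Om a. Q (real_of_int (sengel_d1 y)) (sengel_T y)} = (\<Union>k. A k \<union> B k)"
    unfolding Om_partition[OF a] A_def B_def by auto
  have "emeasure lebesgue {y \<in> Om a. Q (real_of_int (sengel_d1 y)) (sengel_T y)} = (\<Sum>k. emeasure lebesgue (A k \<union> B k))"
    unfolding Seq by (rule suminf_emeasure[symmetric]) (use Am Bm disj in auto)
  also have "\<dots> = (\<Sum>k. emeasure lebesgue (A k) + emeasure lebesgue (B k))"
    by (intro suminf_cong plus_emeasure[symmetric] Am Bm ABd)
  also have "\<dots> = (\<Sum>k. ennreal (1/(2*real (k+a))) * (emeasure lebesgue {z \<in> Om (k+a). Q (2*real (k+a)) z}
          + emeasure lebesgue {z \<in> Om (k+a+1). Q (2*real (k+a)) z}))"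
  proof (intro suminf_cong)
    fix k
    have c: "0 < 1/(2*real (k+a))" using a by simp
    have "emeasure lebesgue (A k) = ennreal (1/(2*real (k+a))) * emeasure lebesgue {z \<in> Om (k+a). Q (2*real (k+a)) z}"
      unfolding A_def Pset_def img_plus[OF m1[of k]] emeasure_lebesgue_affine using c by simp
    moreover have "emeasure lebesgue (B k) = ennreal (1/(2*real (k+a))) * emeasure lebesgue {z \<in> Om (k+a+1). Q (2*real (k+a)) z}"
      unfolding B_def Mset_def img_minus[OF m1[of k]] emeasure_lebesgue_affine using c by simp
    ultimately show "emeasure lebesgue (A k) + emeasure lebesgue (B k) = ennreal (1/(2*real (k+a))) * (emeasure lebesgue {z \<in> Om (k+a). Q (2*real (k+a)) z}
          + emeasure lebesgue {z \<in> Om (k+a+1). Q (2*real (k+a)) z})" by (simp add: distrib_left)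
  qed
  finally show ?thesis .
qed


lemma step_true:
  assumes a: "a \<ge> 1"
  shows "(\<Sum>k. ennreal (1/(2*real (k+a))) * (emeasure lebesgue (Om (k+a)) + emeasure lebesgue (Om (k+a+1))))
     = emeasure lebesgue (Om a)"
  using step[OF a, of "\<lambda>_ _. True"] by simp

lemma Om_branch:
  assumes a: "a \<ge> 1" and y: "y \<in> Om a"
  shows "\<exists>m\<ge>a. real_of_int (sengel_d1 y) = 2*real m \<and> 1/(2*real m + 1) < y \<and> y < 1/(2*real m - 1)
     \<and> (sengel_T y \<in> Om m \<or> sengel_T y \<in> Om (m+1))"
proof -
  obtain k where k: "y \<in> Pset (k+a) \<union> Mset (k+a)" using y unfolding Om_partition[OF a] by blast
  define m where "m = k + a"
  have m1: "m \<ge> 1" "m \<ge> a" using a unfolding m_def by auto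
  have l1: "1/(2*real m) < 1/(2*real m - 1)" using m1 by (intro divide_strict_left_mono) auto
  have l2: "1/(2*real m + 1) < 1/(2*real m)" using m1 by (intro divide_strict_left_mono) auto
  from k have "y \<in> Pset m \<or> y \<in> Mset m" unfolding m_def by auto
  thus ?thesis
  proof
    assume yP: "y \<in> Pset m"
    have h1: "{y \<in> Pset m. sengel_T y \<in> Om m} = (\<lambda>z. (1/(2*real m)) *\<^sub>R z + 1/(2*real m)) ` {z \<in> Om m. z \<in> Om m}"
      using img_plus[OF m1(1), of "\<lambda>_ z. z \<in> Om m"] unfolding Pset_def by simp
    have h2: "{y \<in> Pset m. True} = (\<lambda>z. (1/(2*real m)) *\<^sub>R z + 1/(2*real m)) ` {z \<in> Om m. True}"
      using img_plus[OF m1(1), of "\<lambda>_ _. True"] unfolding Pset_def by simp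
    have "{y \<in> Pset m. sengel_T y \<in> Om m} = {y \<in> Pset m. True}" unfolding h1 h2 by simp
    hence "y \<in> {y \<in> Pset m. sengel_T y \<in> Om m}" using yP by simp
    moreover have "1/(2*real m) < y" "y < 1/(2*real m - 1)" using yP unfolding Pset_def by auto
    moreover have "real_of_int (sengel_d1 y) = 2*real m" using T_plus'[OF m1(1)] calculation(2,3) by auto
    ultimately show ?thesis using m1 l1 l2 by (intro exI[of _ m]) auto
  next
    assume yM: "y \<in> Mset m"
    have h1: "{y \<in> Mset m. sengel_T y \<in> Om (m+1)} = (\<lambda>z. (-(1/(2*real m))) *\<^sub>R z + 1/(2*real m)) ` {z \<in> Om (m+1). z \<in> Om (m+1)}"
      using img_minus[OF m1(1), of "\<lambda>_ z. z \<in> Om (m+1)"] unfolding Mset_def by simp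
    have h2: "{y \<in> Mset m. True} = (\<lambda>z. (-(1/(2*real m))) *\<^sub>R z + 1/(2*real m)) ` {z \<in> Om (m+1). True}"
      using img_minus[OF m1(1), of "\<lambda>_ _. True"] unfolding Mset_def by simp
    have "{y \<in> Mset m. sengel_T y \<in> Om (m+1)} = {y \<in> Mset m. True}" unfolding h1 h2 by simp
    hence "y \<in> {y \<in> Mset m. sengel_T y \<in> Om (m+1)}" using yM by simp
    moreover have "1/(2*real m+1) < y" "y < 1/(2*real m)" using yM unfolding Mset_def by auto
    moreover have "real_of_int (sengel_d1 y) = 2*real m" using T_minus'[OF m1(1)] calculation(2,3) by auto
    ultimately show ?thesis using m1 l1 l2 by (intro exI[of _ m]) auto
  qed
qed

lemma Om_mono:
  assumes "1 \<le> a" "a \<le> b" shows "Om b \<subseteq> Om a"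
proof -
  have "1/(2*real b - 1) \<le> 1/(2*real a - 1)" using assms by (intro divide_left_mono) auto
  thus ?thesis unfolding Om_def by auto
qed

lemma T_Om1: "y \<in> Om 1 \<Longrightarrow> sengel_T y \<in> Om 1"
  using Om_branch[of 1 y] Om_mono[of 1] by fastforce

lemma Tpow_Om1: "y \<in> Om 1 \<Longrightarrow> (sengel_T ^^ k) y \<in> Om 1"
proof (induction k)
  case (Suc k) thus ?case using T_Om1[of "(sengel_T ^^ k) y"] by simp
qed simp

lemma d1_Om1: "y \<in> Om 1 \<Longrightarrow> real_of_int (sengel_d1 y) \<ge> 2"
  using Om_branch[of 1 y] by auto

lemma emeasure_Ioo_gen: "emeasure lborel {l<..<u::real} = ennreal (u - l)"
proof (cases "l \<le> u")
  case True thus ?thesis by simp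
next
  case False thus ?thesis by (simp add: ennreal_neg)
qed

definition ev :: "(nat \<Rightarrow> real) \<Rightarrow> real \<Rightarrow> nat \<Rightarrow> real \<Rightarrow> bool" where
  "ev phi d i y = (if i \<le> 1 then phi 1 * d \<le> real_of_int (sengel_d1 y)
     else phi i * real_of_int (sengel_d (i-1) y) \<le> real_of_int (sengel_d i y))"

lemma ev_shift:
  assumes "i \<ge> 1"
  shows "ev phi d (Suc i) y = ev (\<lambda>n. phi (Suc n)) (real_of_int (sengel_d1 y)) i (sengel_T y)"
proof (cases "i = 1")
  case True thus ?thesis by (simp add: ev_def sengel_d_def)
next
  case False
  then obtain l where l: "i = Suc (Suc l)" using assms by (cases i; cases "i - 1") auto
  have e1: "(sengel_T ^^ Suc l) (sengel_T y) = (sengel_T ^^ Suc (Suc l)) y"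
    by (simp only: funpow_Suc_right o_def)
  have e2: "(sengel_T ^^ l) (sengel_T y) = (sengel_T ^^ Suc l) y"
    by (simp only: funpow_Suc_right o_def)
  show ?thesis unfolding l ev_def sengel_d_def by (simp add: e1 e2 del: funpow.simps)
qed

lemma ev_pred[measurable]: "Measurable.pred borel (ev phi d i)"
proof (cases "i \<le> 1")
  case True
  hence "ev phi d i = (\<lambda>y. phi 1 * d \<le> real_of_int (sengel_d1 y))" unfolding ev_def by auto
  thus ?thesis by simp
next
  case False
  hence "ev phi d i = (\<lambda>y. phi i * real_of_int (sengel_d (i-1) y) \<le> real_of_int (sengel_d i y))" unfolding ev_def by auto
  thus ?thesis by simp
qed

definition Bad :: "(nat \<Rightarrow> real) \<Rightarrow> real \<Rightarrow> (nat \<Rightarrow> bool) \<Rightarrow> nat \<Rightarrow> real set" where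
  "Bad phi d s j = {y. \<forall>i. i < j \<longrightarrow> s (Suc i) \<longrightarrow> \<not> ev phi d (Suc i) y}"

lemma Bad_borel[measurable]: "Bad phi d s j \<in> sets borel"
proof -
  have "Measurable.pred borel (\<lambda>y. \<forall>i. i < j \<longrightarrow> s (Suc i) \<longrightarrow> \<not> ev phi d (Suc i) y)" by measurable
  thus ?thesis unfolding Bad_def pred_def by simp
qed

lemma Good_borel[measurable]: "{y. ev phi d i y} \<in> sets borel"
  using ev_pred[of phi d i] unfolding pred_def by simp

lemma Bad_Suc:
  "Bad phi d s (Suc j) = {y. (s 1 \<longrightarrow> \<not> phi 1 * d \<le> real_of_int (sengel_d1 y))
      \<and> sengel_T y \<in> Bad (\<lambda>n. phi (Suc n)) (real_of_int (sengel_d1 y)) (\<lambda>n. s (Suc n)) j}"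
proof -
  have "(\<forall>i. i < Suc j \<longrightarrow> s (Suc i) \<longrightarrow> \<not> ev phi d (Suc i) y) \<longleftrightarrow>
    (s 1 \<longrightarrow> \<not> ev phi d 1 y) \<and> (\<forall>i. i < j \<longrightarrow> s (Suc (Suc i)) \<longrightarrow> \<not> ev phi d (Suc (Suc i)) y)" for y
    by (auto simp: less_Suc_eq_0_disj)
  moreover have "ev phi d 1 y = (phi 1 * d \<le> real_of_int (sengel_d1 y))" for y by (simp add: ev_def)
  moreover have "ev phi d (Suc (Suc i)) y = ev (\<lambda>n. phi (Suc n)) (real_of_int (sengel_d1 y)) (Suc i) (sengel_T y)" for i y
    by (rule ev_shift) simp
  ultimately show ?thesis unfolding Bad_def by auto
qed

lemma Good_SucSuc:
  "{y. ev phi d (Suc (Suc j)) y} = {y. sengel_T y \<in> {z. ev (\<lambda>n. phi (Suc n)) (real_of_int (sengel_d1 y)) (Suc j) z}}"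
  using ev_shift[of "Suc j" phi d] by auto


definition qf :: "real \<Rightarrow> real" where "qf t = min 1 (1/t)"

lemma qf_bounds: "t > 0 \<Longrightarrow> 0 < qf t \<and> qf t \<le> 1"
  unfolding qf_def by auto

lemma first_bound_bad:
  assumes a: "a \<ge> 1" and d: "d \<ge> 1" "d/2 \<le> 2*real a - 1" and p: "p > 0"
  shows "emeasure lebesgue {y \<in> Om a. \<not> p * d \<le> real_of_int (sengel_d1 y)}
     \<le> ennreal (1/(2*real a - 1) * (1 - qf p/4))"
proof -
  define t where "t = p * d"
  define A where "A = 2*real a - 1"
  have A: "A \<ge> 1" using a unfolding A_def by simp
  have t: "t > 0" unfolding t_def using p d by simp
  have sub: "{y \<in> Om a. \<not> p * d \<le> real_of_int (sengel_d1 y)} \<subseteq> {1/(t+1)<..<1/A}"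
  proof
    fix y assume y: "y \<in> {y \<in> Om a. \<not> p * d \<le> real_of_int (sengel_d1 y)}"
    then obtain m where m: "m \<ge> a" "real_of_int (sengel_d1 y) = 2*real m" "1/(2*real m + 1) < y"
      using Om_branch[OF a, of y] by auto
    have "2*real m < t" using y m unfolding t_def by auto
    hence "1/(t+1) < 1/(2*real m + 1)" using m a by (intro divide_strict_left_mono) auto
    moreover have "y < 1/A" using y unfolding Om_def A_def by auto
    ultimately show "y \<in> {1/(t+1)<..<1/A}" using m by auto
  qed
  have "emeasure lebesgue {y \<in> Om a. \<not> p * d \<le> real_of_int (sengel_d1 y)} \<le> emeasure lebesgue {1/(t+1)<..<1/A}"
    by (rule emeasure_mono[OF sub]) simp
  also have "\<dots> = ennreal (1/A - 1/(t+1))" using emeasure_Ioo_gen by simp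
  also have "\<dots> \<le> ennreal (1/A * (1 - qf p/4))"
  proof (rule ennreal_leI)
    have "qf p * (t+1) \<le> 2*d"
    proof (cases "p \<ge> 1")
      case True
      hence "qf p = 1/p" unfolding qf_def by auto
      hence "qf p * (t+1) = d + 1/p" unfolding t_def using p by (simp add: field_simps)
      moreover have "1/p \<le> 1" using True by simp
      ultimately show ?thesis using d by linarith
    next
      case False
      hence q1: "qf p = 1" unfolding qf_def using p by auto
      have pdd: "p * d \<le> d" using False d by (simp add: mult_le_cancel_right1)
      have "qf p * (t+1) = p*d + 1" unfolding t_def q1 by simp
      thus ?thesis using pdd d by linarith
    qed
    also have "\<dots> \<le> 4*A" using d unfolding A_def by simp
    finally have h: "qf p * (t+1) \<le> 4*A" .
    have "qf p / (4*A) \<le> 1/(t+1)" using h A t by (simp add: field_simps)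
    moreover have "1/A * (1 - qf p/4) = 1/A - qf p/(4*A)" using A by (simp add: field_simps)
    ultimately show "1/A - 1/(t+1) \<le> 1/A * (1 - qf p/4)" by linarith
  qed
  finally show ?thesis unfolding A_def .
qed

lemma first_bound_good:
  assumes a: "a \<ge> 1" and d: "d \<ge> 1" "2*real a - 1 \<le> d + 1" and p: "p > 0"
  shows "emeasure lebesgue {y \<in> Om a. p * d \<le> real_of_int (sengel_d1 y)}
     \<le> ennreal (1/(2*real a - 1) * (4/p))"
proof -
  define t where "t = p * d"
  define A where "A = 2*real a - 1"
  have A: "A \<ge> 1" using a unfolding A_def by simp
  show ?thesis
  proof (cases "p \<le> 4")
    case True
    have "emeasure lebesgue {y \<in> Om a. p * d \<le> real_of_int (sengel_d1 y)} \<le> emeasure lebesgue (Om a)"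
      by (rule emeasure_mono) auto
    also have "\<dots> = ennreal (1/A)" using Om_emeasure[OF a] unfolding A_def .
    also have "\<dots> \<le> ennreal (1/A * (4/p))"
    proof (rule ennreal_leI)
      have "1 \<le> 4/p" using True p by simp
      from mult_left_mono[OF this, of "1/A"] A show "1/A \<le> 1/A * (4/p)" by simp
    qed
    finally show ?thesis unfolding A_def .
  next
    case False
    have pd: "p * d \<ge> p" using d p by (simp add: mult_le_cancel_left1)
    hence t4: "t > 4" using False unfolding t_def by linarith
    have sub: "{y \<in> Om a. p * d \<le> real_of_int (sengel_d1 y)} \<subseteq> {0<..<1/(t-1)}"
    proof
      fix y assume y: "y \<in> {y \<in> Om a. p * d \<le> real_of_int (sengel_d1 y)}"
      then obtain m where m: "m \<ge> a" "real_of_int (sengel_d1 y) = 2*real m" "y < 1/(2*real m - 1)"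
        using Om_branch[OF a, of y] by auto
      have "t \<le> 2*real m" using y m unfolding t_def by auto
      hence "1/(2*real m - 1) \<le> 1/(t-1)" using t4 by (intro divide_left_mono) auto
      moreover have "0 < y" using y unfolding Om_def by auto
      ultimately show "y \<in> {0<..<1/(t-1)}" using m by auto
    qed
    have "emeasure lebesgue {y \<in> Om a. p * d \<le> real_of_int (sengel_d1 y)} \<le> emeasure lebesgue {0<..<1/(t-1)}"
      by (rule emeasure_mono[OF sub]) simp
    also have "\<dots> = ennreal (1/(t-1))" using emeasure_Ioo_gen by simp
    also have "\<dots> \<le> ennreal (1/A * (4/p))"
    proof (rule ennreal_leI)
      have "p * A \<le> p * (d+1)" using d p unfolding A_def by simp
      also have "\<dots> \<le> 4 * (t - 1)"
      proof -
        have e: "p * (d+1) = p*d + p" "4 * (t - 1) = 4*(p*d) - 4" unfolding t_def by (simp_all add: algebra_simps)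
        show ?thesis unfolding e using pd False by linarith
      qed
      finally have h: "p * A \<le> 4 * (t-1)" .
      show "1/(t-1) \<le> 1/A * (4/p)" using h A t4 p by (simp add: field_simps)
    qed
    finally show ?thesis unfolding A_def .
  qed
qed


definition gfac :: "(nat \<Rightarrow> real) \<Rightarrow> (nat \<Rightarrow> bool) \<Rightarrow> nat \<Rightarrow> real" where
  "gfac phi s i = (if s i then 1 - qf (phi i)/4 else 1)"

lemma gfac_pos: "phi i > 0 \<Longrightarrow> gfac phi s i > 0"
  unfolding gfac_def using qf_bounds[of "phi i"] by auto

lemma div_bound:
  "\<forall>phi d a s. (\<forall>n\<ge>1. phi n > 0) \<longrightarrow> a \<ge> 1 \<longrightarrow> d \<ge> 1 \<longrightarrow> d/2 \<le> 2*real a - 1 \<longrightarrow> 2*real a - 1 \<le> d + 1 \<longrightarrow>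
     emeasure lebesgue (Om a \<inter> Bad phi d s j) \<le> ennreal (1/(2*real a - 1) * (\<Prod>i<j. gfac phi s (Suc i)))"
proof (induction j)
  case 0
  show ?case
  proof (intro allI impI)
    fix phi :: "nat \<Rightarrow> real" and d :: real and a :: nat and s :: "nat \<Rightarrow> bool"
    assume "a \<ge> 1"
    thus "emeasure lebesgue (Om a \<inter> Bad phi d s 0) \<le> ennreal (1/(2*real a - 1) * (\<Prod>i<0. gfac phi s (Suc i)))"
      using Om_emeasure[of a] unfolding Bad_def by simp
  qed
next
  case (Suc j)
  show ?case
  proof (intro allI impI)
    fix phi :: "nat \<Rightarrow> real" and d :: real and a :: nat and s :: "nat \<Rightarrow> bool"
    assume phi: "\<forall>n\<ge>1. phi n > 0" and a: "a \<ge> 1" and d: "d \<ge> 1" "d/2 \<le> 2*real a - 1" "2*real a - 1 \<le> d + 1"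
    define phi' where "phi' = (\<lambda>n. phi (Suc n))"
    define s' where "s' = (\<lambda>n. s (Suc n) :: bool)"
    define P' where "P' = (\<Prod>i<j. gfac phi' s' (Suc i))"
    have P'pos: "P' \<ge> 0" unfolding P'_def phi'_def using phi by (intro prod_nonneg) (auto intro: less_imp_le gfac_pos)
    define cond where "cond e = (s 1 \<longrightarrow> \<not> phi 1 * d \<le> e)" for e
    define Q where "Q e z = (cond e \<and> z \<in> Bad phi' e s' j)" for e z
    have phi'pos: "\<forall>n\<ge>1. phi' n > 0" unfolding phi'_def using phi by auto
    have eqS: "Om a \<inter> Bad phi d s (Suc j) = {y \<in> Om a. Q (real_of_int (sengel_d1 y)) (sengel_T y)}"
      unfolding Bad_Suc Q_def cond_def phi'_def s'_def by auto
    have Qm: "{z. Q (2*real m) z} \<in> sets borel" for m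
      by (cases "cond (2*real m)") (auto simp: Q_def)
    have condm: "{z. cond (2*real m)} \<in> sets borel" for m
      by (cases "cond (2*real m)") auto
    have termb: "emeasure lebesgue {z \<in> Om a'. Q (2*real m) z} \<le> emeasure lebesgue {z \<in> Om a'. cond (2*real m)} * ennreal P'"
      if am: "a' = m \<or> a' = m + 1" and m1: "m \<ge> 1" for a' m
    proof (cases "cond (2*real m)")
      case True
      have a'1: "a' \<ge> 1" using am m1 by auto
      have inv: "2*real m \<ge> 1" "(2*real m)/2 \<le> 2*real a' - 1" "2*real a' - 1 \<le> 2*real m + 1"
        using am m1 by auto
      have "emeasure lebesgue {z \<in> Om a'. Q (2*real m) z} = emeasure lebesgue (Om a' \<inter> Bad phi' (2*real m) s' j)"
        using True unfolding Q_def by (simp add: Int_def)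
      also have "\<dots> \<le> ennreal (1/(2*real a' - 1) * P')"
        using Suc.IH phi'pos a'1 inv unfolding P'_def by blast
      also have "\<dots> = emeasure lebesgue {z \<in> Om a'. cond (2*real m)} * ennreal P'"
      proof -
        have "ennreal (1/(2*real a' - 1) * P') = ennreal (1/(2*real a' - 1)) * ennreal P'"
          by (rule ennreal_mult) (use a'1 P'pos in auto)
        moreover have "{z \<in> Om a'. cond (2*real m)} = Om a'" using True by simp
        ultimately show ?thesis using Om_emeasure[OF a'1] by simp
      qed
      finally show ?thesis .
    next
      case False
      thus ?thesis unfolding Q_def by simp
    qed
    have "emeasure lebesgue (Om a \<inter> Bad phi d s (Suc j))
       = (\<Sum>k. ennreal (1/(2*real (k+a))) * (emeasure lebesgue {z \<in> Om (k+a). Q (2*real (k+a)) z}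
          + emeasure lebesgue {z \<in> Om (k+a+1). Q (2*real (k+a)) z}))"
      unfolding eqS by (rule step[OF a, of Q, OF Qm])
    also have "\<dots> \<le> (\<Sum>k. ennreal (1/(2*real (k+a))) * (emeasure lebesgue {z \<in> Om (k+a). cond (2*real (k+a))}
          + emeasure lebesgue {z \<in> Om (k+a+1). cond (2*real (k+a))}) * ennreal P')"
    proof (rule suminf_le)
      fix k
      have m1: "k + a \<ge> 1" using a by simp
      show "ennreal (1/(2*real (k+a))) * (emeasure lebesgue {z \<in> Om (k+a). Q (2*real (k+a)) z}
          + emeasure lebesgue {z \<in> Om (k+a+1). Q (2*real (k+a)) z}) \<le> ennreal (1/(2*real (k+a))) * (emeasure lebesgue {z \<in> Om (k+a). cond (2*real (k+a))}
          + emeasure lebesgue {z \<in> Om (k+a+1). cond (2*real (k+a))}) * ennreal P'"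
        using add_mono[OF termb[of "k+a" "k+a", OF _ m1] termb[of "k+a+1" "k+a", OF _ m1]]
        by (auto simp: distrib_right mult.assoc intro!: mult_left_mono)
    qed auto
    also have "\<dots> = (\<Sum>k. ennreal (1/(2*real (k+a))) * (emeasure lebesgue {z \<in> Om (k+a). cond (2*real (k+a))}
          + emeasure lebesgue {z \<in> Om (k+a+1). cond (2*real (k+a))})) * ennreal P'"
      by (rule ennreal_suminf_multc)
    also have "\<dots> = emeasure lebesgue {y \<in> Om a. cond (real_of_int (sengel_d1 y))} * ennreal P'"
      using step[OF a, of "\<lambda>e z. cond e", OF condm] by simp
    also have "\<dots> \<le> ennreal (1/(2*real a - 1) * gfac phi s 1) * ennreal P'"
    proof (rule mult_right_mono)
      show "emeasure lebesgue {y \<in> Om a. cond (real_of_int (sengel_d1 y))} \<le> ennreal (1/(2*real a - 1) * gfac phi s 1)"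
      proof (cases "s 1")
        case True
        thus ?thesis unfolding cond_def gfac_def using first_bound_bad[OF a d(1,2), of "phi 1"] phi by simp
      next
        case False
        thus ?thesis unfolding cond_def gfac_def using Om_emeasure[OF a] by simp
      qed
    qed simp
    also have "\<dots> = ennreal (1/(2*real a - 1) * (\<Prod>i<Suc j. gfac phi s (Suc i)))"
    proof -
      have "(\<Prod>i<Suc j. gfac phi s (Suc i)) = gfac phi s 1 * P'"
        unfolding P'_def prod.lessThan_Suc_shift phi'_def s'_def gfac_def by simp
      moreover have "gfac phi s 1 \<ge> 0" using gfac_pos[of phi 1 s] phi by auto
      hence "ennreal (1/(2*real a - 1) * gfac phi s 1) * ennreal P' = ennreal (1/(2*real a - 1) * gfac phi s 1 * P')"
        using a P'pos by (intro ennreal_mult[symmetric]) auto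
      ultimately show ?thesis by (simp only: mult.assoc)
    qed
    finally show "emeasure lebesgue (Om a \<inter> Bad phi d s (Suc j)) \<le> ennreal (1/(2*real a - 1) * (\<Prod>i<Suc j. gfac phi s (Suc i)))" .
  qed
qed


lemma conv_bound:
  "\<forall>phi d a. (\<forall>n\<ge>1. phi n > 0) \<longrightarrow> a \<ge> 1 \<longrightarrow> d \<ge> 1 \<longrightarrow> d/2 \<le> 2*real a - 1 \<longrightarrow> 2*real a - 1 \<le> d + 1 \<longrightarrow>
     emeasure lebesgue (Om a \<inter> {y. ev phi d (Suc j) y}) \<le> ennreal (1/(2*real a - 1) * (4 / phi (Suc j)))"
proof (induction j)
  case 0
  show ?case
  proof (intro allI impI)
    fix phi :: "nat \<Rightarrow> real" and d :: real and a :: nat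
    assume phi: "\<forall>n\<ge>1. phi n > 0" and a: "a \<ge> 1" and d: "d \<ge> 1" "d/2 \<le> 2*real a - 1" "2*real a - 1 \<le> d + 1"
    have "Om a \<inter> {y. ev phi d (Suc 0) y} = {y \<in> Om a. phi 1 * d \<le> real_of_int (sengel_d1 y)}"
      unfolding ev_def by auto
    thus "emeasure lebesgue (Om a \<inter> {y. ev phi d (Suc 0) y}) \<le> ennreal (1/(2*real a - 1) * (4 / phi (Suc 0)))"
      using first_bound_good[OF a d(1,3), of "phi 1"] phi by simp
  qed
next
  case (Suc j)
  show ?case
  proof (intro allI impI)
    fix phi :: "nat \<Rightarrow> real" and d :: real and a :: nat
    assume phi: "\<forall>n\<ge>1. phi n > 0" and a: "a \<ge> 1" and d: "d \<ge> 1" "d/2 \<le> 2*real a - 1" "2*real a - 1 \<le> d + 1"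
    define phi' where "phi' = (\<lambda>n. phi (Suc n))"
    define B where "B = 4 / phi (Suc (Suc j))"
    have Bpos: "B \<ge> 0" unfolding B_def using phi by (auto intro: less_imp_le)
    define Q where "Q e z = ev phi' e (Suc j) z" for e z
    have phi'pos: "\<forall>n\<ge>1. phi' n > 0" unfolding phi'_def using phi by auto
    have eqS: "Om a \<inter> {y. ev phi d (Suc (Suc j)) y} = {y \<in> Om a. Q (real_of_int (sengel_d1 y)) (sengel_T y)}"
      unfolding Good_SucSuc Q_def phi'_def by auto
    have Qm: "{z. Q (2*real m) z} \<in> sets borel" for m
      unfolding Q_def by simp
    have termb: "emeasure lebesgue {z \<in> Om a'. Q (2*real m) z} \<le> emeasure lebesgue (Om a') * ennreal B"
      if am: "a' = m \<or> a' = m + 1" and m1: "m \<ge> 1" for a' m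
    proof -
      have a'1: "a' \<ge> 1" using am m1 by auto
      have inv: "2*real m \<ge> 1" "(2*real m)/2 \<le> 2*real a' - 1" "2*real a' - 1 \<le> 2*real m + 1"
        using am m1 by auto
      have "emeasure lebesgue {z \<in> Om a'. Q (2*real m) z} = emeasure lebesgue (Om a' \<inter> {z. ev phi' (2*real m) (Suc j) z})"
        unfolding Q_def by (simp add: Int_def)
      also have "\<dots> \<le> ennreal (1/(2*real a' - 1) * B)"
      proof -
        have "emeasure lebesgue (Om a' \<inter> {z. ev phi' (2*real m) (Suc j) z}) \<le> ennreal (1/(2*real a' - 1) * (4 / phi' (Suc j)))"
          by (rule Suc.IH[rule_format]) (use phi'pos a'1 inv in auto)
        thus ?thesis unfolding B_def phi'_def by simp
      qed
      also have "\<dots> = emeasure lebesgue (Om a') * ennreal B"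
      proof -
        have "ennreal (1/(2*real a' - 1) * B) = ennreal (1/(2*real a' - 1)) * ennreal B"
          by (rule ennreal_mult) (use a'1 Bpos in auto)
        thus ?thesis using Om_emeasure[OF a'1] by simp
      qed
      finally show ?thesis .
    qed
    have "emeasure lebesgue (Om a \<inter> {y. ev phi d (Suc (Suc j)) y})
       = (\<Sum>k. ennreal (1/(2*real (k+a))) * (emeasure lebesgue {z \<in> Om (k+a). Q (2*real (k+a)) z}
          + emeasure lebesgue {z \<in> Om (k+a+1). Q (2*real (k+a)) z}))"
      unfolding eqS by (rule step[OF a, of Q, OF Qm])
    also have "\<dots> \<le> (\<Sum>k. ennreal (1/(2*real (k+a))) * (emeasure lebesgue (Om (k+a))
          + emeasure lebesgue (Om (k+a+1))) * ennreal B)"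
    proof (rule suminf_le)
      fix k
      have m1: "k + a \<ge> 1" using a by simp
      show "ennreal (1/(2*real (k+a))) * (emeasure lebesgue {z \<in> Om (k+a). Q (2*real (k+a)) z}
          + emeasure lebesgue {z \<in> Om (k+a+1). Q (2*real (k+a)) z}) \<le> ennreal (1/(2*real (k+a))) * (emeasure lebesgue (Om (k+a))
          + emeasure lebesgue (Om (k+a+1))) * ennreal B"
        using add_mono[OF termb[of "k+a" "k+a", OF _ m1] termb[of "k+a+1" "k+a", OF _ m1]]
        by (auto simp: distrib_right mult.assoc intro!: mult_left_mono)
    qed auto
    also have "\<dots> = (\<Sum>k. ennreal (1/(2*real (k+a))) * (emeasure lebesgue (Om (k+a))
          + emeasure lebesgue (Om (k+a+1)))) * ennreal B"
      by (rule ennreal_suminf_multc)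
    also have "\<dots> = emeasure lebesgue (Om a) * ennreal B"
      using step_true[OF a] by simp
    also have "\<dots> = ennreal (1/(2*real a - 1) * B)"
    proof -
      have "ennreal (1/(2*real a - 1) * B) = ennreal (1/(2*real a - 1)) * ennreal B"
        by (rule ennreal_mult) (use a Bpos in auto)
      thus ?thesis using Om_emeasure[OF a] by simp
    qed
    finally show "emeasure lebesgue (Om a \<inter> {y. ev phi d (Suc (Suc j)) y}) \<le> ennreal (1/(2*real a - 1) * (4 / phi (Suc (Suc j))))"
      unfolding B_def .
  qed
qed


lemma Om1_eq: "Om 1 = {0<..<1} - \<rat>"
  unfolding Om_def by simp

lemma R_ev:
  assumes x: "x \<in> Om 1" and n: "n \<ge> 1"
  shows "(phi n \<le> sengel_R n x) \<longleftrightarrow> ev phi 1 n x"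
proof (cases "n = 1")
  case True thus ?thesis unfolding sengel_R_def ev_def sengel_d_def by simp
next
  case False
  then obtain k where k: "n = Suc (Suc k)" using n by (cases n; cases "n - 1") auto
  have e: "sengel_d (n-1) x = sengel_d1 ((sengel_T ^^ k) x)" unfolding sengel_d_def k by simp
  define b where "b = real_of_int (sengel_d (n-1) x)"
  have pos: "b > 0" using d1_Om1[OF Tpow_Om1[OF x, of k]] unfolding b_def e by simp
  have R: "sengel_R n x = real_of_int (sengel_d n x) / b"
    unfolding sengel_R_def b_def k by simp
  have E: "ev phi 1 n x = (phi n * b \<le> real_of_int (sengel_d n x))"
    unfolding ev_def b_def k by simp
  show ?thesis unfolding R E by (rule pos_le_divide_eq[OF pos])
qed

lemma Rset_eq: "sengel_Rset phi = {x \<in> Om 1. infinite {n. n \<ge> 1 \<and> ev phi 1 n x}}"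
proof -
  have "x \<in> Om 1 \<Longrightarrow> {n. n \<ge> 1 \<and> sengel_R n x \<ge> phi n} = {n. n \<ge> 1 \<and> ev phi 1 n x}" for x
    using R_ev[of x] by auto
  hence "x \<in> sengel_Rset phi \<longleftrightarrow> x \<in> {x \<in> Om 1. infinite {n. n \<ge> 1 \<and> ev phi 1 n x}}" for x
    unfolding sengel_Rset_def Om1_eq[symmetric] by (cases "x \<in> Om 1") simp_all
  thus ?thesis by blast
qed

lemma Rset_limsup:
  "sengel_Rset phi = limsup (\<lambda>n. Om 1 \<inter> {y. ev phi 1 (Suc n) y})"
proof -
  have inf: "infinite {n. n \<ge> 1 \<and> ev phi 1 n x} \<longleftrightarrow> (\<forall>N. \<exists>n\<ge>N. ev phi 1 (Suc n) x)" for x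
  proof -
    have "infinite {n. n \<ge> 1 \<and> ev phi 1 n x} \<longleftrightarrow> (\<forall>m. \<exists>n\<ge>m. n \<in> {n. n \<ge> 1 \<and> ev phi 1 n x})"
      by (rule infinite_nat_iff_unbounded_le)
    also have "\<dots> \<longleftrightarrow> (\<forall>N. \<exists>n\<ge>N. ev phi 1 (Suc n) x)"
    proof
      assume h: "\<forall>m. \<exists>n\<ge>m. n \<in> {n. n \<ge> 1 \<and> ev phi 1 n x}"
      show "\<forall>N. \<exists>n\<ge>N. ev phi 1 (Suc n) x"
      proof
        fix N obtain n where "n \<ge> Suc N" "n \<ge> 1" "ev phi 1 n x" using h by blast
        thus "\<exists>n\<ge>N. ev phi 1 (Suc n) x" by (intro exI[of _ "n - 1"]) auto
      qed
    next
      assume h: "\<forall>N. \<exists>n\<ge>N. ev phi 1 (Suc n) x"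
      show "\<forall>m. \<exists>n\<ge>m. n \<in> {n. n \<ge> 1 \<and> ev phi 1 n x}"
      proof
        fix m obtain n where "n \<ge> m" "ev phi 1 (Suc n) x" using h by blast
        thus "\<exists>n\<ge>m. n \<in> {n. n \<ge> 1 \<and> ev phi 1 n x}" by (intro exI[of _ "Suc n"]) auto
      qed
    qed
    finally show ?thesis .
  qed
  have "x \<in> sengel_Rset phi \<longleftrightarrow> x \<in> limsup (\<lambda>n. Om 1 \<inter> {y. ev phi 1 (Suc n) y})" for x
  proof
    assume "x \<in> sengel_Rset phi"
    hence x: "x \<in> Om 1" "\<forall>N. \<exists>n\<ge>N. ev phi 1 (Suc n) x" unfolding Rset_eq using inf by auto
    show "x \<in> limsup (\<lambda>n. Om 1 \<inter> {y. ev phi 1 (Suc n) y})" unfolding limsup_INF_SUP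
    proof (intro INT_I)
      fix N :: nat
      obtain n where "n \<ge> N" "ev phi 1 (Suc n) x" using x(2) by blast
      thus "x \<in> (\<Union>m\<in>{N..}. Om 1 \<inter> {y. ev phi 1 (Suc m) y})" using x(1) by auto
    qed
  next
    assume "x \<in> limsup (\<lambda>n. Om 1 \<inter> {y. ev phi 1 (Suc n) y})"
    hence h: "\<forall>N. \<exists>n\<ge>N. x \<in> Om 1 \<and> ev phi 1 (Suc n) x" unfolding limsup_INF_SUP by (auto simp: Bex_def)
    hence "x \<in> Om 1" by blast
    moreover have "\<forall>N. \<exists>n\<ge>N. ev phi 1 (Suc n) x" using h by blast
    ultimately show "x \<in> sengel_Rset phi" unfolding Rset_eq using inf by auto
  qed
  thus ?thesis by blast
qed

lemma conv_part:
  fixes phi :: "nat \<Rightarrow> real"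
  assumes pos: "\<And>n. n \<ge> 1 \<Longrightarrow> phi n > 0" and sm: "summable (\<lambda>n. 1 / phi (Suc n))"
  shows "sengel_Rset phi \<in> sets lebesgue \<and> emeasure lebesgue (sengel_Rset phi) = 0"
proof -
  define E where "E n = Om 1 \<inter> {y. ev phi 1 (Suc n) y}" for n
  have Em: "E n \<in> sets lebesgue" for n unfolding E_def by simp
  have Efin: "emeasure lebesgue (E n) < \<infinity>" for n
  proof -
    have "emeasure lebesgue (E n) \<le> emeasure lebesgue (Om 1)" unfolding E_def by (rule emeasure_mono) auto
    also have "\<dots> < \<infinity>" using Om_emeasure[of 1] by simp
    finally show ?thesis .
  qed
  have Eb: "measure lebesgue (E n) \<le> 4 / phi (Suc n)" for n
  proof -
    have "emeasure lebesgue (E n) \<le> ennreal (1/(2*real (1::nat) - 1) * (4 / phi (Suc n)))"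
      unfolding E_def by (rule conv_bound[rule_format]) (use pos in auto)
    hence "emeasure lebesgue (E n) \<le> ennreal (4 / phi (Suc n))" by simp
    moreover have "4 / phi (Suc n) \<ge> 0" using pos[of "Suc n"] by simp
    ultimately show ?thesis unfolding measure_def by (intro enn2real_leI) auto
  qed
  have "summable (\<lambda>n. 4 * (1 / phi (Suc n)))" using sm by (rule summable_mult)
  hence "summable (\<lambda>n. measure lebesgue (E n))"
    by (rule summable_comparison_test') (use Eb in auto)
  hence "limsup E \<in> null_sets lebesgue" by (intro borel_cantelli_limsup1 Em Efin)
  moreover have "sengel_Rset phi = limsup E" unfolding Rset_limsup E_def ..
  ultimately show ?thesis by (simp add: null_sets_def)
qed


lemma not_summable_p:
  fixes phi :: "nat \<Rightarrow> real"
  assumes pos: "\<And>n. n \<ge> 1 \<Longrightarrow> phi n > 0" and ns: "\<not> summable (\<lambda>n. 1 / phi (Suc n))"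
  shows "\<not> summable (\<lambda>n. qf (phi (Suc n)) / 4)"
proof
  assume "summable (\<lambda>n. qf (phi (Suc n)) / 4)"
  hence "summable (\<lambda>n. 4 * (qf (phi (Suc n)) / 4))" by (rule summable_mult)
  hence s: "summable (\<lambda>n. qf (phi (Suc n)))" by simp
  hence "(\<lambda>n. qf (phi (Suc n))) \<longlonglongrightarrow> 0" by (rule summable_LIMSEQ_zero)
  hence "eventually (\<lambda>n. qf (phi (Suc n)) < 1) sequentially" by (rule order_tendstoD(2)) simp
  hence "eventually (\<lambda>n. qf (phi (Suc n)) = 1 / phi (Suc n)) sequentially"
    by (rule eventually_mono) (auto simp: qf_def min_def split: if_splits)
  hence "summable (\<lambda>n. qf (phi (Suc n))) = summable (\<lambda>n. 1 / phi (Suc n))" by (rule summable_cong)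
  thus False using s ns by simp
qed

lemma prod_small:
  fixes r :: "nat \<Rightarrow> real"
  assumes r0: "\<And>i. 0 \<le> r i" and r1: "\<And>i. r i \<le> 1" and ns: "\<not> summable r" and e: "e > 0"
  shows "\<exists>j. (\<Prod>i<j. 1 - r i) < e"
proof -
  have "\<not> (\<forall>j. (\<Sum>i<j. r i) \<le> - ln e)"
  proof
    assume "\<forall>j. (\<Sum>i<j. r i) \<le> - ln e"
    hence "summable r" by (intro summableI_nonneg_bounded[of r "- ln e"]) (use r0 in auto)
    thus False using ns by simp
  qed
  then obtain j where j: "(\<Sum>i<j. r i) > - ln e" by (meson not_le)
  have "(\<Prod>i<j. 1 - r i) \<le> (\<Prod>i<j. exp (- r i))"
  proof (rule prod_mono)
    fix i show "0 \<le> 1 - r i \<and> 1 - r i \<le> exp (- r i)" using r1[of i] exp_ge_add_one_self[of "- r i"] by simp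
  qed
  also have "\<dots> = exp (- (\<Sum>i<j. r i))" by (simp add: exp_sum[symmetric] sum_negf)
  also have "\<dots> < exp (ln e)" using j by simp
  also have "\<dots> = e" using e by simp
  finally show ?thesis by blast
qed

lemma D_null:
  fixes phi :: "nat \<Rightarrow> real"
  assumes pos: "\<And>n. n \<ge> 1 \<Longrightarrow> phi n > 0" and ns: "\<not> summable (\<lambda>n. 1 / phi (Suc n))"
  shows "Om 1 \<inter> {x. \<forall>n\<ge>N. \<not> ev phi 1 (Suc n) x} \<in> null_sets lebesgue"
proof -
  define D where "D = Om 1 \<inter> {x. \<forall>n\<ge>N. \<not> ev phi 1 (Suc n) x}"
  define sN where "sN i = (i \<ge> Suc N)" for i
  define r where "r i = (if i \<ge> N then qf (phi (Suc i)) / 4 else 0)" for i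
  have Dm: "D \<in> sets lebesgue"
  proof -
    have "Measurable.pred borel (\<lambda>x. \<forall>n. N \<le> n \<longrightarrow> \<not> ev phi 1 (Suc n) x)" by measurable
    hence "{x. \<forall>n\<ge>N. \<not> ev phi 1 (Suc n) x} \<in> sets borel" unfolding pred_def by simp
    thus ?thesis unfolding D_def by simp
  qed
  have r0: "0 \<le> r i" "r i \<le> 1" for i
    using qf_bounds[of "phi (Suc i)"] pos[of "Suc i"] unfolding r_def by auto
  have rns: "\<not> summable r"
  proof -
    have "eventually (\<lambda>i. r i = qf (phi (Suc i)) / 4) sequentially"
      unfolding r_def eventually_sequentially by auto
    hence "summable r = summable (\<lambda>i. qf (phi (Suc i)) / 4)" by (rule summable_cong)
    thus ?thesis using not_summable_p[OF pos ns] by simp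
  qed
  have g: "gfac phi sN (Suc i) = 1 - r i" for i unfolding gfac_def sN_def r_def by simp
  have bound: "emeasure lebesgue D \<le> ennreal (\<Prod>i<j. 1 - r i)" for j
  proof -
    have "D \<subseteq> Om 1 \<inter> Bad phi 1 sN j" unfolding D_def Bad_def sN_def by auto
    hence "emeasure lebesgue D \<le> emeasure lebesgue (Om 1 \<inter> Bad phi 1 sN j)"
      by (rule emeasure_mono) simp
    also have "\<dots> \<le> ennreal (1/(2*real (1::nat) - 1) * (\<Prod>i<j. gfac phi sN (Suc i)))"
      by (rule div_bound[rule_format]) (use pos in auto)
    finally show ?thesis unfolding g by simp
  qed
  have "emeasure lebesgue D \<le> 0"
  proof (rule ennreal_le_epsilon)
    fix e :: real assume e: "0 < e"
    obtain j where "(\<Prod>i<j. 1 - r i) < e" using prod_small[OF r0 rns e] by blast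
    hence "ennreal (\<Prod>i<j. 1 - r i) \<le> ennreal e" by (intro ennreal_leI) simp
    thus "emeasure lebesgue D \<le> 0 + ennreal e" using bound[of j] by simp
  qed
  hence "emeasure lebesgue D = 0" by simp
  thus ?thesis using Dm unfolding D_def by (simp add: null_sets_def)
qed

lemma div_part:
  fixes phi :: "nat \<Rightarrow> real"
  assumes pos: "\<And>n. n \<ge> 1 \<Longrightarrow> phi n > 0" and ns: "\<not> summable (\<lambda>n. 1 / phi (Suc n))"
  shows "sengel_Rset phi \<in> sets lebesgue \<and> emeasure lebesgue (sengel_Rset phi) = 1"
proof -
  define D where "D N = Om 1 \<inter> {x. \<forall>n\<ge>N. \<not> ev phi 1 (Suc n) x}" for N
  have DN: "D N \<in> null_sets lebesgue" for N unfolding D_def by (rule D_null) (use pos ns in auto)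
  have Dn: "(\<Union>N. D N) \<in> null_sets lebesgue" by (rule null_sets_UN) (rule DN)
  have eq: "sengel_Rset phi = Om 1 - (\<Union>N. D N)"
  proof (intro set_eqI)
    fix x
    have "x \<in> sengel_Rset phi \<longleftrightarrow> x \<in> Om 1 \<and> (\<forall>N. \<exists>n\<ge>N. ev phi 1 (Suc n) x)"
      unfolding Rset_limsup limsup_INF_SUP by auto
    also have "\<dots> \<longleftrightarrow> x \<in> Om 1 - (\<Union>N. D N)" unfolding D_def by auto
    finally show "x \<in> sengel_Rset phi \<longleftrightarrow> x \<in> Om 1 - (\<Union>N. D N)" .
  qed
  have "emeasure lebesgue (Om 1 - (\<Union>N. D N)) = emeasure lebesgue (Om 1)"
    by (rule emeasure_Diff_null_set[OF Dn]) simp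
  also have "\<dots> = 1" using Om_emeasure[of 1] by simp
  finally show ?thesis unfolding eq using Dn by (auto simp: null_sets_def)
qed

theorem theorem1p3:
  fixes phi :: "nat \<Rightarrow> real"
  assumes pos: "\<And>n. n \<ge> 1 \<Longrightarrow> phi n > 0"
  shows "(\<not> summable (\<lambda>n. 1 / phi (Suc n)) \<longrightarrow>
            sengel_Rset phi \<in> sets lebesgue \<and> emeasure lebesgue (sengel_Rset phi) = 1)
       \<and> (summable (\<lambda>n. 1 / phi (Suc n)) \<longrightarrow>
            sengel_Rset phi \<in> sets lebesgue \<and> emeasure lebesgue (sengel_Rset phi) = 0)"
proof (rule conjI; rule impI)
  assume "\<not> summable (\<lambda>n. 1 / phi (Suc n))"
  thus "sengel_Rset phi \<in> sets lebesgue \<and> emeasure lebesgue (sengel_Rset phi) = 1"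
    by (intro div_part) (use pos in auto)
next
  assume "summable (\<lambda>n. 1 / phi (Suc n))"
  thus "sengel_Rset phi \<in> sets lebesgue \<and> emeasure lebesgue (sengel_Rset phi) = 0"
    by (intro conv_part) (use pos in auto)
qed

end
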